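(* Let $0<S<T$, let $\tilde\beta:[0,T]\to\mathbb{R}^d$, $\tilde B:[0,T]\to\mathbb{R}^{d\times d}$, $\tilde\sigma:[0,T]\to\mathbb{R}^{d\times d'}$ be continuous, $\tilde a=\tilde\sigma\tilde\sigma'$, $L_S\in\mathbb{R}^{m_S\times d}$, $L_T\in\mathbb{R}^{m_T\times d}$, let $\Sigma_S,\Sigma_T$ be symmetric positive definite matrices of sizes $m_S$, $m_T$, and $v_S\in\mathbb{R}^{m_S}$, $v_T\in\mathbb{R}^{m_T}$. With $\tilde L$, $\Upsilon$, $\mu$, $x_{\rm obs}$ as in the context, assume that for every $t\in[0,T]$ the matrix $\tilde M(t)=\big(\int_t^T\tilde L(\tau)\tilde a(\tau)\tilde L(\tau)'\,\mathrm d\tau+\Upsilon(t)\big)^{-1}$ exists and that the null space of $\tilde L(t)$ is $\{0\}$. Let $\tilde H(t)=\tilde L(t)'\tilde M(t)\tilde L(t)$, $\tilde H^\dagger(t)=\tilde H(t)^{-1}$, and $$\nu(t)=\tilde H^\dagger(t)\tilde L(t)'\tilde M(t)\big(x_{\rm obs}(t)-\mu(t)\big).$$ Then for $t\in(S,T]$, $$\frac{\mathrm d\nu(t)}{\mathrm dt}=\tilde B(t)\nu(t)+\tilde\beta(t),\qquad \nu(T)=\big(L_T'\Sigma_T^{-1}L_T\big)^{-1}L_T'\Sigma_T^{-1}v_T.$$ On $[0,S]$ the same differential equation holds, and $\nu(S)$ is obtained from the right limit $\nu(S+)$ by $$\nu(S)=\tilde H^\dagger(S)\big(L_S'\Sigma_S^{-1}v_S+\tilde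 H(S+)\nu(S+)\big).$$
   Context: Let $\Phi$ solve $\mathrm d\Phi(t)=\tilde B(t)\Phi(t)\,\mathrm dt$, $\Phi(0)=I$, and $\Phi(t,s)=\Phi(t)\Phi(s)^{-1}$. Define $\tilde L(t)=\begin{bmatrix}L_S\Phi(S,t)\mathbf 1_{[0,S]}(t)\\ L_T\Phi(T,t)\end{bmatrix}$ for $t\in[0,S]$ and $\tilde L(t)=L_T\Phi(T,t)$ for $t\in(S,T]$; $\Upsilon(t)=\operatorname{diag}(\Sigma_S,\Sigma_T)$ for $t\in[0,S]$ and $\Upsilon(t)=\Sigma_T$ for $t\in(S,T]$; $x_{\rm obs}(t)=(v_S',v_T')'$ for $t\in[0,S]$ and $x_{\rm obs}(t)=v_T$ for $t\in(S,T]$; $\mu(t)=\int_t^T\tilde L(\tau)\tilde\beta(\tau)\,\mathrm d\tau$. For $t\in[0,S]$, in the integrals defining $\mu(t)$ and $\tilde M(t)$ the integrand $\tilde L(\tau)$ means the $(m_S+m_T)\times d$ matrix $\begin{bmatrix}L_S\Phi(S,\tau)\mathbf 1_{[0,S]}(\tau)\\ L_T\Phi(T,\tau)\end{bmatrix}$ for all $\tau\in[t,T]$. $f(S+)$ denotes the right limit at $S$. *)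

theory Defs
  imports "HOL-Analysis.Analysis"
begin

definition stack_rows :: "real^'n^'a \<Rightarrow> real^'n^'b \<Rightarrow> real^'n^('a + 'b)" where
  "stack_rows A C = (\<chi> i. case i of Inl k \<Rightarrow> A $ k | Inr k \<Rightarrow> C $ k)"

definition stack_vec :: "real^'a \<Rightarrow> real^'b \<Rightarrow> real^('a + 'b)" where
  "stack_vec v w = (\<chi> i. case i of Inl k \<Rightarrow> v $ k | Inr k \<Rightarrow> w $ k)"

definition block_diag :: "real^'a^'a \<Rightarrow> real^'b^'b \<Rightarrow> real^('a + 'b)^('a + 'b)" where
  "block_diag A C = (\<chi> i j. case (i, j) of
       (Inl k, Inl l) \<Rightarrow> A $ k $ l
     | (Inr k, Inr l) \<Rightarrow> C $ k $ l
     | _ \<Rightarrow> 0)"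

definition trans_mat :: "(real \<Rightarrow> real^'d^'d) \<Rightarrow> real \<Rightarrow> real \<Rightarrow> real^'d^'d" where
  "trans_mat \<Phi> t s = \<Phi> t ** matrix_inv (\<Phi> s)"

definition sym_posdef :: "real^'m^'m \<Rightarrow> bool" where
  "sym_posdef A \<longleftrightarrow> transpose A = A \<and> (\<forall>x. x \<noteq> 0 \<longrightarrow> x \<bullet> (A *v x) > 0)"

definition kf_M :: "(real \<Rightarrow> real^'d^'m) \<Rightarrow> (real \<Rightarrow> real^'d^'d) \<Rightarrow> real^'m^'m \<Rightarrow> real \<Rightarrow> real \<Rightarrow> real^'m^'m" where
  "kf_M Lt a Ups T t =
     matrix_inv (integral {t..T} (\<lambda>\<tau>. Lt \<tau> ** a \<tau> ** transpose (Lt \<tau>)) + Ups)"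

definition kf_H :: "(real \<Rightarrow> real^'d^'m) \<Rightarrow> (real \<Rightarrow> real^'d^'d) \<Rightarrow> real^'m^'m \<Rightarrow> real \<Rightarrow> real \<Rightarrow> real^'d^'d" where
  "kf_H Lt a Ups T t = transpose (Lt t) ** kf_M Lt a Ups T t ** Lt t"

definition kf_mu :: "(real \<Rightarrow> real^'d^'m) \<Rightarrow> (real \<Rightarrow> real^'d) \<Rightarrow> real \<Rightarrow> real \<Rightarrow> real^'m" where
  "kf_mu Lt \<beta> T t = integral {t..T} (\<lambda>\<tau>. Lt \<tau> *v \<beta> \<tau>)"

definition kf_nu :: "(real \<Rightarrow> real^'d^'m) \<Rightarrow> (real \<Rightarrow> real^'d) \<Rightarrow> (real \<Rightarrow> real^'d^'d) \<Rightarrow> real^'m^'m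
      \<Rightarrow> real^'m \<Rightarrow> real \<Rightarrow> real \<Rightarrow> real^'d" where
  "kf_nu Lt \<beta> a Ups xobs T t =
     matrix_inv (kf_H Lt a Ups T t) *v
       (transpose (Lt t) *v (kf_M Lt a Ups T t *v (xobs - kf_mu Lt \<beta> T t)))"


definition diffusion :: "(real \<Rightarrow> real^'e^'d) \<Rightarrow> real \<Rightarrow> real^'d^'d" where
  "diffusion \<sigma> t = \<sigma> t ** transpose (\<sigma> t)"

text \<open>\<open>L~\<close> on [0,S] (stacked, used as integrand for all \<tau>) and on (S,T].\<close>
definition L_stack :: "real^'d^'mS \<Rightarrow> real^'d^'mT \<Rightarrow> (real \<Rightarrow> real^'d^'d) \<Rightarrow> real \<Rightarrow> real
      \<Rightarrow> real \<Rightarrow> real^'d^('mS + 'mT)" where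
  "L_stack L_S L_T \<Phi> S T \<tau> = stack_rows
     (if \<tau> \<in> {0..S} then L_S ** trans_mat \<Phi> S \<tau> else 0)
     (L_T ** trans_mat \<Phi> T \<tau>)"

definition L_single :: "real^'d^'mT \<Rightarrow> (real \<Rightarrow> real^'d^'d) \<Rightarrow> real \<Rightarrow> real \<Rightarrow> real^'d^'mT" where
  "L_single L_T \<Phi> T \<tau> = L_T ** trans_mat \<Phi> T \<tau>"

end

theory Submission
  imports Defs
begin



lemma mm_add_rdistrib: "(A + B) ** (C::'a::semiring_1^_^_) = A ** C + B ** C"
  by (vector matrix_matrix_mult_def sum.distrib distrib_right)

lemma bilinear_mmult: "bilinear ((**) :: real^'n^'m \<Rightarrow> real^'p^'n \<Rightarrow> real^'p^'m)"
  unfolding bilinear_def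
  by (auto intro!: linearI simp: matrix_add_ldistrib mm_add_rdistrib matrix_scalar_ac scalar_matrix_assoc)

lemma bb_mmult: "bounded_bilinear ((**) :: real^'n^'m \<Rightarrow> real^'p^'n \<Rightarrow> real^'p^'m)"
  using bilinear_mmult bilinear_conv_bounded_bilinear by blast

lemma bilinear_mvmult: "bilinear ((*v) :: real^'n^'m \<Rightarrow> real^'n \<Rightarrow> real^'m)"
  unfolding bilinear_def
  by (auto intro!: linearI simp: matrix_vector_right_distrib matrix_vector_mult_add_rdistrib
     matrix_vector_mult_scaleR scaleR_matrix_vector_assoc)

lemma bb_mvmult: "bounded_bilinear ((*v) :: real^'n^'m \<Rightarrow> real^'n \<Rightarrow> real^'m)"
  using bilinear_mvmult bilinear_conv_bounded_bilinear by blast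

lemma bl_transpose: "bounded_linear (transpose :: real^'n^'m \<Rightarrow> real^'m^'n)"
proof -
  have "linear (transpose :: real^'n^'m \<Rightarrow> real^'m^'n)"
    by (rule linearI) (auto simp: transpose_def vec_eq_iff)
  then show ?thesis using linear_conv_bounded_linear by blast
qed




lemma minv: "invertible (A::'a::semiring_1^'n^'m) \<Longrightarrow> A ** matrix_inv A = mat 1 \<and> matrix_inv A ** A = mat 1"
  unfolding invertible_def matrix_inv_def by (rule someI_ex)

lemma minv_r: "invertible (A::'a::semiring_1^'n^'m) \<Longrightarrow> A ** matrix_inv A = mat 1"
  using minv by blast
lemma minv_l: "invertible (A::'a::semiring_1^'n^'m) \<Longrightarrow> matrix_inv A ** A = mat 1"
  using minv by blast

lemma mm_diff_ldistrib: "(A::real^'n^'m) ** (B - C) = A ** B - A ** C"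
  by (rule bounded_bilinear.diff_right[OF bb_mmult])
lemma mm_diff_rdistrib: "((A::real^'n^'m) - B) ** C = A ** C - B ** C"
  by (rule bounded_bilinear.diff_left[OF bb_mmult])
lemma mm_minus_left: "(- (A::real^'n^'m)) ** C = - (A ** C)"
  by (rule bounded_bilinear.minus_left[OF bb_mmult])
lemma mm_minus_right: "(A::real^'n^'m) ** (- C) = - (A ** C)"
  by (rule bounded_bilinear.minus_right[OF bb_mmult])

lemma inv_diff_ident:
  fixes A B :: "real^'n^'n"
  assumes "invertible A" "invertible B"
  shows "matrix_inv A - matrix_inv B = matrix_inv A ** (B - A) ** matrix_inv B"
proof -
  have "matrix_inv A ** (B - A) ** matrix_inv B
      = matrix_inv A ** (B ** matrix_inv B) - (matrix_inv A ** A) ** matrix_inv B"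
    by (simp add: matrix_mul_assoc mm_diff_ldistrib mm_diff_rdistrib)
  then show ?thesis using assms by (simp add: minv_l minv_r)
qed




lemma inv_cont:
  fixes F :: "real \<Rightarrow> real^'n^'n"
  assumes inv: "\<And>x. x \<in> s \<Longrightarrow> invertible (F x)" and t: "t \<in> s"
    and cF: "continuous (at t within s) F"
  shows "continuous (at t within s) (\<lambda>x. matrix_inv (F x))"
proof -
  have "\<exists>K>0. \<forall>(a::real^'n^'n) (b::real^'n^'n). norm (a ** b) \<le> norm a * norm b * K"
    using bounded_bilinear.pos_bounded[OF bb_mmult] by blast
  then obtain K where K: "K > 0" "\<And>(a::real^'n^'n) (b::real^'n^'n). norm (a ** b) \<le> norm a * norm b * K"
    by blast
  define G where "G x = matrix_inv (F x)" for x
  define g0 where "g0 = norm (G t)"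
  have idn: "G x - G t = G x ** (F t - F x) ** G t" if "x \<in> s" for x
    unfolding G_def using inv_diff_ident[OF inv[OF that] inv[OF t]] .
  have nb: "norm (G x - G t) \<le> norm (G x) * norm (F x - F t) * g0 * K * K" if "x \<in> s" for x
  proof -
    have "norm (G x - G t) \<le> norm (G x ** (F t - F x)) * norm (G t) * K"
      using idn[OF that] K(2)[of "G x ** (F t - F x)" "G t"] by simp
    also have "\<dots> \<le> (norm (G x) * norm (F t - F x) * K) * norm (G t) * K"
      by (intro mult_right_mono K(2)) (use K in auto)
    finally show ?thesis by (simp add: g0_def norm_minus_commute mult_ac)
  qed
  define e0 where "e0 = 1 / (2 * K * K * (g0 + 1))"
  have g0nn: "g0 \<ge> 0" by (simp add: g0_def)
  then have e0: "e0 > 0" using K unfolding e0_def by (simp add: add_pos_nonneg)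
  have FF: "(F \<longlongrightarrow> F t) (at t within s)" using cF continuous_within by blast
  then have ev: "\<forall>\<^sub>F x in at t within s. norm (F x - F t) < e0"
    using e0 by (auto simp: tendsto_iff dist_norm)
  have ev2: "\<forall>\<^sub>F x in at t within s. x \<in> s" by (simp add: eventually_at_filter)
  have bnd: "\<forall>\<^sub>F x in at t within s. norm (G x - G t) \<le> 2 * g0 * g0 * K * K * norm (F x - F t)"
    using ev ev2
  proof eventually_elim
    case (elim x)
    have a: "norm (F x - F t) * g0 * K * K \<le> 1/2"
    proof -
      have "norm (F x - F t) * g0 * K * K \<le> e0 * g0 * K * K"
        using elim(1) K by (intro mult_right_mono) (auto simp: g0_def)
      also have "\<dots> = g0 / (2 * (g0 + 1))"
      proof -
        have "K \<noteq> 0" "g0 + 1 \<noteq> 0" using K g0nn by auto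
        then show ?thesis unfolding e0_def by (simp add: divide_simps)
      qed
      also have "\<dots> \<le> 1/2" using g0nn by (simp add: divide_simps)
      finally show ?thesis .
    qed
    have "norm (G x) \<le> norm (G t) + norm (G x - G t)" by (metis norm_triangle_sub)
    also have "\<dots> \<le> g0 + norm (G x) * (norm (F x - F t) * g0 * K * K)"
      using nb[OF elim(2)] by (simp add: g0_def mult_ac)
    also have "\<dots> \<le> g0 + norm (G x) * (1/2)"
      using a by (intro add_left_mono mult_left_mono) auto
    finally have gx: "norm (G x) \<le> 2 * g0" by simp
    have "norm (G x - G t) \<le> norm (G x) * norm (F x - F t) * g0 * K * K" by (rule nb[OF elim(2)])
    also have "\<dots> \<le> (2 * g0) * norm (F x - F t) * g0 * K * K"
      using gx K by (intro mult_right_mono) (auto simp: g0_def)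
    finally show ?case by (simp add: mult_ac)
  qed
  have "((\<lambda>x. 2 * g0 * g0 * K * K * norm (F x - F t)) \<longlongrightarrow> 2 * g0 * g0 * K * K * 0) (at t within s)"
    by (intro tendsto_intros) (use FF LIM_zero_iff tendsto_norm_zero in blast)
  then have "((\<lambda>x. G x - G t) \<longlongrightarrow> 0) (at t within s)"
    using Lim_null_comparison[OF bnd] by simp
  then show ?thesis unfolding continuous_within G_def by (simp add: LIM_zero_iff)
qed

lemma vd_iff_quot:
  fixes f :: "real \<Rightarrow> 'a::real_normed_vector"
  shows "(f has_vector_derivative D) (at x within s) \<longleftrightarrow>
     ((\<lambda>y. (1/(y-x)) *\<^sub>R (f y - f x)) \<longlongrightarrow> D) (at x within s)"
proof -
  have ev: "\<forall>\<^sub>F y in at x within s. norm ((1/norm(y-x)) *\<^sub>R (f y - (f x + (y-x) *\<^sub>R D)))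
       = norm ((1/(y-x)) *\<^sub>R (f y - f x) - D)"
  proof (rule eventually_at_filter[THEN iffD2], rule always_eventually, intro allI impI)
    fix y assume "y \<noteq> x"
    have e1: "(1/(y-x)) *\<^sub>R ((y-x) *\<^sub>R D) = D" using \<open>y \<noteq> x\<close> by simp
    have "(1/(y-x)) *\<^sub>R (f y - (f x + (y-x) *\<^sub>R D)) = (1/(y-x)) *\<^sub>R ((f y - f x) - (y-x) *\<^sub>R D)"
      by (simp add: diff_diff_eq)
    also have "\<dots> = (1/(y-x)) *\<^sub>R (f y - f x) - D" by (simp only: scaleR_diff_right e1)
    finally have "(1/(y-x)) *\<^sub>R (f y - f x) - D = (1/(y-x)) *\<^sub>R (f y - (f x + (y-x) *\<^sub>R D))" by simp
    then show "norm ((1/norm(y-x)) *\<^sub>R (f y - (f x + (y-x) *\<^sub>R D))) = norm ((1/(y-x)) *\<^sub>R (f y - f x) - D)"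
      by simp
  qed
  have "(f has_vector_derivative D) (at x within s) \<longleftrightarrow>
     ((\<lambda>y. (1/norm(y-x)) *\<^sub>R (f y - (f x + (y-x) *\<^sub>R D))) \<longlongrightarrow> 0) (at x within s)"
    by (simp add: has_vector_derivative_def has_derivative_within bounded_linear_scaleR_left)
  also have "\<dots> \<longleftrightarrow> ((\<lambda>y. norm ((1/norm(y-x)) *\<^sub>R (f y - (f x + (y-x) *\<^sub>R D)))) \<longlongrightarrow> 0) (at x within s)"
    by (rule tendsto_norm_zero_iff[symmetric])
  also have "\<dots> \<longleftrightarrow> ((\<lambda>y. norm ((1/(y-x)) *\<^sub>R (f y - f x) - D)) \<longlongrightarrow> 0) (at x within s)"
    by (rule tendsto_cong[OF ev])
  also have "\<dots> \<longleftrightarrow> ((\<lambda>y. (1/(y-x)) *\<^sub>R (f y - f x)) \<longlongrightarrow> D) (at x within s)"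
    by (simp add: tendsto_norm_zero_iff LIM_zero_iff)
  finally show ?thesis .
qed

lemma inv_deriv:
  fixes F :: "real \<Rightarrow> real^'n^'n"
  assumes inv: "\<And>x. x \<in> s \<Longrightarrow> invertible (F x)" and t: "t \<in> s"
    and dF: "(F has_vector_derivative F') (at t within s)"
  shows "((\<lambda>x. matrix_inv (F x)) has_vector_derivative - (matrix_inv (F t) ** F' ** matrix_inv (F t))) (at t within s)"
proof -
  define G where "G x = matrix_inv (F x)" for x
  have cG: "(G \<longlongrightarrow> G t) (at t within s)"
  proof -
    have "continuous (at t within s) F" using has_vector_derivative_continuous[OF dF] .
    from inv_cont[OF inv t this] show ?thesis unfolding G_def continuous_within .
  qed
  have qF: "((\<lambda>y. (1/(y-t)) *\<^sub>R (F y - F t)) \<longlongrightarrow> F') (at t within s)"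
    using dF vd_iff_quot by blast
  have lim: "((\<lambda>y. - (G y ** ((1/(y-t)) *\<^sub>R (F y - F t)) ** G t)) \<longlongrightarrow> - (G t ** F' ** G t)) (at t within s)"
    by (intro tendsto_minus bounded_bilinear.tendsto[OF bb_mmult] cG qF tendsto_const)
  have ev: "\<forall>\<^sub>F y in at t within s. - (G y ** ((1/(y-t)) *\<^sub>R (F y - F t)) ** G t) = (1/(y-t)) *\<^sub>R (G y - G t)"
  proof (rule eventually_at_filter[THEN iffD2], rule always_eventually, intro allI impI)
    fix y assume "y \<noteq> t" "y \<in> s"
    have "G y - G t = G y ** (F t - F y) ** G t"
      unfolding G_def by (rule inv_diff_ident[OF inv[OF \<open>y \<in> s\<close>] inv[OF t]])
    also have "\<dots> = - (G y ** (F y - F t) ** G t)"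
      by (metis minus_diff_eq mm_minus_left mm_minus_right)
    finally show "- (G y ** ((1/(y-t)) *\<^sub>R (F y - F t)) ** G t) = (1/(y-t)) *\<^sub>R (G y - G t)"
      by (simp add: matrix_scalar_ac scalar_matrix_assoc)
  qed
  have "((\<lambda>y. (1/(y-t)) *\<^sub>R (G y - G t)) \<longlongrightarrow> - (G t ** F' ** G t)) (at t within s)"
    using tendsto_cong[OF ev] lim by blast
  then show ?thesis unfolding G_def[symmetric] using vd_iff_quot by blast
qed




lemma phi_inj:
  fixes \<Phi> B :: "real \<Rightarrow> real^'d^'d"
  assumes cB: "continuous_on {0..T} B"
    and dP: "\<forall>t\<in>{0..T}. (\<Phi> has_vector_derivative (B t ** \<Phi> t)) (at t within {0..T})"
    and P0: "\<Phi> 0 = mat 1" and t0: "t0 \<in> {0..T}" and v: "\<Phi> t0 *v v = 0"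
  shows "v = 0"
proof -
  have "bounded (B ` {0..T})" using compact_imp_bounded compact_continuous_image[OF cB compact_Icc] by blast
  then obtain Kb where Kb: "Kb > 0" "\<And>t. t \<in> {0..T} \<Longrightarrow> norm (B t) \<le> Kb"
    unfolding bounded_pos by blast
  have "\<exists>K>0. \<forall>(a::real^'d^'d) (b::real^'d). norm (a *v b) \<le> norm a * norm b * K"
    using bounded_bilinear.pos_bounded[OF bb_mvmult] by blast
  then obtain Kv where Kv: "Kv > 0" "\<And>(a::real^'d^'d) (b::real^'d). norm (a *v b) \<le> norm a * norm b * Kv"
    by blast
  define K where "K = Kb * Kv"
  have K: "K > 0" using Kb Kv by (simp add: K_def)
  define u where "u t = \<Phi> t *v v" for t
  have Bu: "norm (B t *v u t) \<le> K * norm (u t)" if "t \<in> {0..T}" for t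
  proof -
    have "norm (B t *v u t) \<le> norm (B t) * norm (u t) * Kv" by (rule Kv(2))
    also have "\<dots> \<le> Kb * norm (u t) * Kv" using Kb(2)[OF that] Kv by (intro mult_right_mono) auto
    finally show ?thesis by (simp add: K_def mult_ac)
  qed
  have du: "(u has_vector_derivative (B t *v u t)) (at t within {0..T})" if "t \<in> {0..T}" for t
  proof -
    have "((\<lambda>t. \<Phi> t *v v) has_vector_derivative ((B t ** \<Phi> t) *v v)) (at t within {0..T})"
      by (rule bounded_linear.has_vector_derivative[OF bounded_bilinear.bounded_linear_left[OF bb_mvmult]])
         (use dP that in blast)
    then show ?thesis unfolding u_def by (simp add: matrix_vector_mul_assoc)
  qed
  define f where "f t = exp (2*K*t) * (u t \<bullet> u t)" for t
  have df: "(f has_real_derivative (exp (2*K*t) * (2*K) * (u t \<bullet> u t) + exp (2*K*t) * (u t \<bullet> (B t *v u t) + (B t *v u t) \<bullet> u t))) (at t within {0..T})"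
    if "t \<in> {0..T}" for t
  proof -
    have i: "((\<lambda>t. u t \<bullet> u t) has_vector_derivative (u t \<bullet> (B t *v u t) + (B t *v u t) \<bullet> u t)) (at t within {0..T})"
      by (rule bounded_bilinear.has_vector_derivative[OF bounded_bilinear_inner du[OF that] du[OF that]])
    have e: "((\<lambda>t. exp (2*K*t)) has_real_derivative exp (2*K*t) * (2*K)) (at t within {0..T})"
      by (auto intro!: derivative_eq_intros)
    show ?thesis unfolding f_def
      using DERIV_mult[OF e i[unfolded has_real_derivative_iff_has_vector_derivative[symmetric]]]
      by (simp add: algebra_simps)
  qed
  have nonneg: "0 \<le> exp (2*K*t) * (2*K) * (u t \<bullet> u t) + exp (2*K*t) * (u t \<bullet> (B t *v u t) + (B t *v u t) \<bullet> u t)"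
    if "t \<in> {0..T}" for t
  proof -
    have "\<bar>u t \<bullet> (B t *v u t)\<bar> \<le> norm (u t) * norm (B t *v u t)" by (rule Cauchy_Schwarz_ineq2)
    also have "\<dots> \<le> norm (u t) * (K * norm (u t))" by (intro mult_left_mono Bu that) auto
    finally have a: "\<bar>u t \<bullet> (B t *v u t)\<bar> \<le> K * (u t \<bullet> u t)" by (simp add: power2_norm_eq_inner[symmetric] power2_eq_square mult_ac)
    have "0 \<le> (2*K) * (u t \<bullet> u t) + (u t \<bullet> (B t *v u t) + (B t *v u t) \<bullet> u t)"
      using a by (simp add: inner_commute)
    then have "0 \<le> exp (2*K*t) * ((2*K) * (u t \<bullet> u t) + (u t \<bullet> (B t *v u t) + (B t *v u t) \<bullet> u t))"
      by simp
    then show ?thesis by (simp add: algebra_simps)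
  qed
  have "f 0 \<le> f t0"
  proof (rule DERIV_nonneg_imp_increasing_open[of 0 t0 f])
    show "0 \<le> t0" using t0 by simp
    fix x assume x: "0 < x" "x < t0"
    then have xT: "x \<in> {0..T}" using t0 by auto
    have "at x within {0..T} = at x" using x t0 by (intro at_within_Icc_at) auto
    then show "\<exists>y. (f has_real_derivative y) (at x) \<and> 0 \<le> y" using df[OF xT] nonneg[OF xT] by auto
  next
    have "continuous_on {0..T} f"
      using df by (meson DERIV_continuous continuous_on_eq_continuous_within)
    then show "continuous_on {0..t0} f" by (rule continuous_on_subset) (use t0 in auto)
  qed
  moreover have "f t0 = 0" using v by (simp add: f_def u_def)
  moreover have "f 0 = v \<bullet> v" using P0 by (simp add: f_def u_def)
  ultimately have "v \<bullet> v \<le> 0" by simp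
  then show ?thesis using inner_gt_zero_iff[of v] by linarith
qed

lemma phi_invertible:
  fixes \<Phi> B :: "real \<Rightarrow> real^'d^'d"
  assumes cB: "continuous_on {0..T} B"
    and dP: "\<forall>t\<in>{0..T}. (\<Phi> has_vector_derivative (B t ** \<Phi> t)) (at t within {0..T})"
    and P0: "\<Phi> 0 = mat 1" and t0: "t0 \<in> {0..T}"
  shows "invertible (\<Phi> t0)"
proof -
  have "inj ((*v) (\<Phi> t0))"
  proof (rule injI)
    fix x y assume "\<Phi> t0 *v x = \<Phi> t0 *v y"
    then have "\<Phi> t0 *v (x - y) = 0" by (simp add: matrix_vector_mult_diff_distrib)
    then show "x = y" using phi_inj[OF cB dP P0 t0, of "x - y"] by simp
  qed
  then show ?thesis using matrix_left_invertible_injective invertible_left_inverse by blast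
qed




lemma mv_minus_left: "(- (A::real^'n^'m)) *v x = - (A *v x)"
  by (rule bounded_bilinear.minus_left[OF bb_mvmult])
lemma mv_minus_right: "(A::real^'n^'m) *v (- x) = - (A *v x)"
  by (rule bounded_bilinear.minus_right[OF bb_mvmult])
lemma transpose_minus: "transpose (- (A::real^'n^'m)) = - transpose A"
  by (simp add: transpose_def vec_eq_iff)
lemma transpose_add: "transpose ((A::real^'n^'m) + C) = transpose A + transpose C"
  by (simp add: transpose_def vec_eq_iff)

lemma nu_deriv:
  fixes L :: "real \<Rightarrow> real^'d^'m" and A :: "real \<Rightarrow> real^'m^'m" and mu :: "real \<Rightarrow> real^'m"
    and B a :: "real^'d^'d" and \<beta> :: "real^'d" and x :: "real^'m"
  assumes t: "t \<in> U"
    and dL: "(L has_vector_derivative - (L t ** B)) (at t within U)"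
    and dA: "(A has_vector_derivative - (L t ** a ** transpose (L t))) (at t within U)"
    and dmu: "(mu has_vector_derivative - (L t *v \<beta>)) (at t within U)"
    and invA: "\<And>s. s \<in> U \<Longrightarrow> invertible (A s)"
    and invH: "\<And>s. s \<in> U \<Longrightarrow> invertible (transpose (L s) ** matrix_inv (A s) ** L s)"
  shows "((\<lambda>s. matrix_inv (transpose (L s) ** matrix_inv (A s) ** L s) *v (transpose (L s) *v (matrix_inv (A s) *v (x - mu s))))
     has_vector_derivative
     (B *v (matrix_inv (transpose (L t) ** matrix_inv (A t) ** L t) *v (transpose (L t) *v (matrix_inv (A t) *v (x - mu t)))) + \<beta>))
     (at t within U)"
proof -
  define Lt where "Lt = L t"
  define Mt where "Mt = matrix_inv (A t)"
  define Ht where "Ht = transpose Lt ** Mt ** Lt"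
  define Hi where "Hi = matrix_inv Ht"
  define w where "w = x - mu t"
  have dM: "((\<lambda>s. matrix_inv (A s)) has_vector_derivative - (Mt ** (- (Lt ** a ** transpose Lt)) ** Mt)) (at t within U)"
    unfolding Mt_def Lt_def by (rule inv_deriv[OF invA t dA])
  have dLT: "((\<lambda>s. transpose (L s)) has_vector_derivative transpose (- (Lt ** B))) (at t within U)"
    unfolding Lt_def by (rule bounded_linear.has_vector_derivative[OF bl_transpose dL])
  have dLM: "((\<lambda>s. transpose (L s) ** matrix_inv (A s)) has_vector_derivative
      (transpose Lt ** (- (Mt ** (- (Lt ** a ** transpose Lt)) ** Mt)) + transpose (- (Lt ** B)) ** Mt)) (at t within U)"
    using bounded_bilinear.has_vector_derivative[OF bb_mmult dLT dM] unfolding Lt_def Mt_def .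
  have dH: "((\<lambda>s. transpose (L s) ** matrix_inv (A s) ** L s) has_vector_derivative
      (transpose Lt ** Mt ** (- (Lt ** B)) + (transpose Lt ** (- (Mt ** (- (Lt ** a ** transpose Lt)) ** Mt)) + transpose (- (Lt ** B)) ** Mt) ** Lt)) (at t within U)"
    using bounded_bilinear.has_vector_derivative[OF bb_mmult dLM dL] unfolding Lt_def Mt_def .
  define dHt where "dHt = transpose Lt ** Mt ** (- (Lt ** B)) + (transpose Lt ** (- (Mt ** (- (Lt ** a ** transpose Lt)) ** Mt)) + transpose (- (Lt ** B)) ** Mt) ** Lt"
  have dHi: "((\<lambda>s. matrix_inv (transpose (L s) ** matrix_inv (A s) ** L s)) has_vector_derivative - (Hi ** dHt ** Hi)) (at t within U)"
    using inv_deriv[OF invH t dH] unfolding Hi_def Ht_def dHt_def Lt_def Mt_def .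
  have dw: "((\<lambda>s. x - mu s) has_vector_derivative - (- (Lt *v \<beta>))) (at t within U)"
    unfolding Lt_def using has_vector_derivative_diff[OF has_vector_derivative_const dmu] by simp
  have d1: "((\<lambda>s. matrix_inv (A s) *v (x - mu s)) has_vector_derivative
      (Mt *v (- (- (Lt *v \<beta>))) + (- (Mt ** (- (Lt ** a ** transpose Lt)) ** Mt)) *v w)) (at t within U)"
    using bounded_bilinear.has_vector_derivative[OF bb_mvmult dM dw] unfolding Mt_def w_def .
  have d2: "((\<lambda>s. transpose (L s) *v (matrix_inv (A s) *v (x - mu s))) has_vector_derivative
      (transpose Lt *v (Mt *v (- (- (Lt *v \<beta>))) + (- (Mt ** (- (Lt ** a ** transpose Lt)) ** Mt)) *v w)
       + transpose (- (Lt ** B)) *v (Mt *v w))) (at t within U)"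
    using bounded_bilinear.has_vector_derivative[OF bb_mvmult dLT d1] unfolding Mt_def w_def Lt_def .
  note d3 = bounded_bilinear.has_vector_derivative[OF bb_mvmult dHi d2]
  have key1: "Hi *v (transpose Lt *v (Mt *v (Lt *v z))) = z" for z
  proof -
    have "Hi ** Ht = mat 1" unfolding Hi_def using minv_l invH[OF t] unfolding Ht_def Lt_def Mt_def by blast
    then show ?thesis unfolding Ht_def by (simp add: matrix_vector_mul_assoc matrix_mul_assoc)
  qed
  have key2: "transpose Lt *v (Mt *v (Lt *v (Hi *v z))) = z" for z
  proof -
    have "Ht ** Hi = mat 1" unfolding Hi_def using minv_r invH[OF t] unfolding Ht_def Lt_def Mt_def by blast
    then show ?thesis unfolding Ht_def by (simp add: matrix_vector_mul_assoc matrix_mul_assoc)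
  qed
  show ?thesis
    apply (rule has_vector_derivative_eq_rhs[OF d3])
    unfolding Hi_def[symmetric] Ht_def[symmetric] Lt_def[symmetric] Mt_def[symmetric] w_def[symmetric] dHt_def
    apply (simp del: transpose_matrix_vector vector_transpose_matrix
       add: matrix_vector_mul_assoc[symmetric] matrix_transpose_mul transpose_minus mv_minus_left
        matrix_vector_mult_add_rdistrib matrix_vector_right_distrib key1 key2 mv_minus_right
        matrix_vector_mult_diff_distrib)
    done
qed




lemma int_lower_deriv:
  fixes f g :: "real \<Rightarrow> 'a::banach"
  assumes ab: "a \<le> b" and bc: "b \<le> c" and cg: "continuous_on {a..b} g"
    and fg: "\<And>x. x \<in> {a..b} \<Longrightarrow> f x = g x" and fi: "f integrable_on {b..c}" and t: "t \<in> {a..b}"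
  shows "((\<lambda>s. integral {s..c} f) has_vector_derivative - (g t)) (at t within {a..b})"
proof -
  define K0 where "K0 = integral {a..b} g + integral {b..c} f"
  have gi: "g integrable_on {a..b}" using cg integrable_continuous_interval by blast
  have eq: "integral {s..c} f = K0 - integral {a..s} g" if s: "s \<in> {a..b}" for s
  proof -
    have gis: "g integrable_on {s..b}" using gi s integrable_subinterval_real by fastforce
    have fis: "f integrable_on {s..b}" by (rule integrable_eq[OF gis]) (use fg s in auto)
    have "f integrable_on {s..c}" using Henstock_Kurzweil_Integration.integrable_combine[OF _ bc fis fi] s by auto
    then have "integral {s..c} f = integral {s..b} f + integral {b..c} f"
      using Henstock_Kurzweil_Integration.integral_combine[of s b c f] s bc by auto
    also have "integral {s..b} f = integral {s..b} g" by (rule integral_cong) (use fg s in auto)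
    also have "integral {s..b} g = integral {a..b} g - integral {a..s} g"
      using Henstock_Kurzweil_Integration.integral_combine[OF _ _ gi, of s] s by (auto simp: algebra_simps)
    finally show ?thesis unfolding K0_def by simp
  qed
  have "((\<lambda>s. K0 - integral {a..s} g) has_vector_derivative 0 - g t) (at t within {a..b})"
    by (intro has_vector_derivative_diff has_vector_derivative_const integral_has_vector_derivative cg t)
  then have "((\<lambda>s. K0 - integral {a..s} g) has_vector_derivative - g t) (at t within {a..b})" by simp
  then show ?thesis
    by (rule has_vector_derivative_transform[OF t, rotated]) (use eq in auto)
qed

lemma inner_mv: "(x::real^'m) \<bullet> (A *v y) = (transpose A *v x) \<bullet> (y::real^'n)"
  by (simp add: dot_lmul_matrix[symmetric])

lemma psd_integral:
  fixes Lf :: "real \<Rightarrow> real^'d^'m" and \<sigma> :: "real \<Rightarrow> real^'e^'d"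
  assumes fi: "(\<lambda>\<tau>. Lf \<tau> ** (\<sigma> \<tau> ** transpose (\<sigma> \<tau>)) ** transpose (Lf \<tau>)) integrable_on X"
  shows "0 \<le> z \<bullet> (integral X (\<lambda>\<tau>. Lf \<tau> ** (\<sigma> \<tau> ** transpose (\<sigma> \<tau>)) ** transpose (Lf \<tau>)) *v z)"
proof -
  define h where "h Y = z \<bullet> (Y *v z)" for Y :: "real^'m^'m"
  have hl: "bounded_linear h" unfolding h_def
    by (intro bounded_linear_compose[OF bounded_linear_inner_right] bounded_bilinear.bounded_linear_left[OF bb_mvmult])
  define f where "f = (\<lambda>\<tau>. Lf \<tau> ** (\<sigma> \<tau> ** transpose (\<sigma> \<tau>)) ** transpose (Lf \<tau>))"
  have "h (integral X f) = integral X (h \<circ> f)" using integral_linear[OF fi[folded f_def] hl] by simp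
  also have "\<dots> \<ge> 0"
  proof (rule integral_nonneg)
    show "(h \<circ> f) integrable_on X" using integrable_linear[OF fi[folded f_def] hl] .
    fix x
    have "(h \<circ> f) x = (transpose (\<sigma> x) *v (transpose (Lf x) *v z)) \<bullet> (transpose (\<sigma> x) *v (transpose (Lf x) *v z))"
      unfolding h_def f_def o_def
      by (simp only: matrix_vector_mul_assoc[symmetric] inner_mv matrix_transpose_mul transpose_transpose)
    then show "0 \<le> (h \<circ> f) x" by simp
  qed
  finally show ?thesis unfolding h_def f_def .
qed

lemma inj_invertible:
  fixes A :: "real^'n^'n"
  assumes "\<And>x. A *v x = 0 \<Longrightarrow> x = 0"
  shows "invertible A"
proof -
  have "inj ((*v) A)"
  proof (rule injI)
    fix x y assume "A *v x = A *v y"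
    then have "A *v (x - y) = 0" by (simp add: matrix_vector_mult_diff_distrib)
    then show "x = y" using assms[of "x - y"] by simp
  qed
  then show ?thesis using matrix_left_invertible_injective invertible_left_inverse by blast
qed

lemma inv_unique:
  fixes X Y :: "real^'n^'n"
  assumes "invertible X" "X ** Y = mat 1"
  shows "matrix_inv X = Y"
proof -
  have "matrix_inv X = matrix_inv X ** (X ** Y)" using assms by simp
  also have "\<dots> = Y" using minv_l[OF assms(1)] by (simp add: matrix_mul_assoc)
  finally show ?thesis .
qed

lemma pd_invertible:
  fixes A :: "real^'n^'n"
  assumes "\<And>z. z \<noteq> 0 \<Longrightarrow> z \<bullet> (A *v z) > 0"
  shows "invertible A"
  by (rule inj_invertible) (use assms in force)

lemma H_invertible:
  fixes A :: "real^'m^'m" and L :: "real^'d^'m"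
  assumes pd: "\<And>z. z \<noteq> 0 \<Longrightarrow> z \<bullet> (A *v z) > 0" and inj: "\<And>x. L *v x = 0 \<Longrightarrow> x = 0"
  shows "invertible (transpose L ** matrix_inv A ** L)"
proof (rule inj_invertible)
  fix x assume h: "(transpose L ** matrix_inv A ** L) *v x = 0"
  have iA: "invertible A" using pd_invertible[OF pd] .
  show "x = 0"
  proof (rule ccontr)
    assume "x \<noteq> 0"
    then have y: "L *v x \<noteq> 0" using inj by blast
    define z where "z = matrix_inv A *v (L *v x)"
    have Az: "A *v z = L *v x" unfolding z_def using minv_r[OF iA] by (simp add: matrix_vector_mul_assoc matrix_mul_assoc)
    then have "z \<noteq> 0" using y by auto
    then have "0 < z \<bullet> (A *v z)" by (rule pd)
    also have "z \<bullet> (A *v z) = (L *v x) \<bullet> z" by (simp add: Az inner_commute)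
    also have "\<dots> = x \<bullet> ((transpose L ** matrix_inv A ** L) *v x)"
      unfolding z_def by (simp only: inner_mv[of x] matrix_vector_mul_assoc[symmetric] transpose_transpose)
    also have "\<dots> = 0" using h by simp
    finally show False by simp
  qed
qed




lemma sum_UNIV_sum: "sum f (UNIV::('a::finite + 'b::finite) set) = sum (f \<circ> Inl) UNIV + sum (f \<circ> Inr) UNIV"
  by (simp add: UNIV_Plus_UNIV[symmetric] sum.Plus del: UNIV_Plus_UNIV)

lemma vec_split: "(z::real^('a::finite + 'b::finite)) = stack_vec (\<chi> k. z $ Inl k) (\<chi> k. z $ Inr k)"
  by (simp add: stack_vec_def vec_eq_iff split: sum.split)

lemma stack_vec_eq0: "stack_vec p q = 0 \<longleftrightarrow> p = 0 \<and> q = 0"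
  by (auto simp: stack_vec_def vec_eq_iff split: sum.splits)

lemma inner_stack: "stack_vec p q \<bullet> stack_vec p' q' = p \<bullet> p' + (q::real^'b::finite) \<bullet> q'"
  by (simp add: inner_vec_def sum_UNIV_sum stack_vec_def o_def)

lemma stack_vec_add: "stack_vec p q + stack_vec p' q' = stack_vec (p + p') (q + q')"
  by (simp add: stack_vec_def vec_eq_iff split: sum.split)
lemma stack_vec_diff: "stack_vec p q - stack_vec p' q' = stack_vec (p - p') (q - q')"
  by (simp add: stack_vec_def vec_eq_iff split: sum.split)

lemma block_mv: "block_diag X Y *v stack_vec p q = stack_vec (X *v p) (Y *v q)"
  by (simp add: block_diag_def stack_vec_def matrix_vector_mult_def vec_eq_iff sum_UNIV_sum o_def split: sum.split)

lemma stack_rows_mv: "stack_rows A C *v x = stack_vec (A *v x) (C *v x)"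
  by (simp add: stack_rows_def stack_vec_def matrix_vector_mult_def vec_eq_iff split: sum.split)

lemma stackT_mv: "transpose (stack_rows A C) *v stack_vec u w = transpose A *v u + transpose C *v w"
  by (simp add: stack_rows_def stack_vec_def matrix_vector_mult_def vec_eq_iff transpose_def sum_UNIV_sum o_def
      del: transpose_matrix_vector)

lemma mat_eq_stack:
  fixes A B :: "real^'n^('a::finite + 'b::finite)"
  assumes "\<And>x. A *v x = B *v x" shows "A = B"
  using assms matrix_eq by blast

lemma mat_eq_stack2:
  fixes A B :: "real^('a::finite + 'b::finite)^'m"
  assumes "\<And>p q. A *v stack_vec p q = B *v stack_vec p q" shows "A = B"
proof -
  have "A *v x = B *v x" for x using assms vec_split[of x] by metis
  then show ?thesis using matrix_eq by blast
qed

lemma stack_rows_mult: "stack_rows (A ** X) (C ** X) = stack_rows A C ** (X::real^'n^'d)"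
  by (rule mat_eq_stack) (simp add: stack_rows_mv matrix_vector_mul_assoc[symmetric])

lemma block_mult: "block_diag A C ** block_diag A' C' = block_diag (A ** A') (C ** (C'::real^'b::finite^'b))"
  by (rule mat_eq_stack2) (simp add: block_mv matrix_vector_mul_assoc[symmetric])

lemma block_one: "block_diag (mat 1) (mat 1) = (mat 1 :: real^('a::finite+'b::finite)^('a+'b))"
  by (rule mat_eq_stack2) (simp add: block_mv)

lemma block_add: "block_diag A C + block_diag A' C' = block_diag (A + A') (C + (C'::real^'b::finite^'b))"
  by (rule mat_eq_stack2) (simp add: block_mv matrix_vector_mult_add_rdistrib stack_vec_add)

lemma block_inv:
  fixes A :: "real^'a::finite^'a" and C :: "real^'b::finite^'b"
  assumes "invertible A" "invertible C" "invertible (block_diag A C)"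
  shows "matrix_inv (block_diag A C) = block_diag (matrix_inv A) (matrix_inv C)"
  by (rule inv_unique[OF assms(3)]) (simp add: block_mult minv_r assms block_one)

lemma block_pd:
  fixes A :: "real^'a::finite^'a" and C :: "real^'b::finite^'b"
  assumes "sym_posdef A" "sym_posdef C" "z \<noteq> 0"
  shows "z \<bullet> (block_diag A C *v z) > 0"
proof -
  obtain p q where z: "z = stack_vec p q" using vec_split by blast
  have "p \<noteq> 0 \<or> q \<noteq> 0" using assms(3) z stack_vec_eq0 by auto
  moreover have "p \<bullet> (A *v p) \<ge> 0" using assms(1) unfolding sym_posdef_def by (cases "p = 0") (auto intro: less_imp_le)
  moreover have "q \<bullet> (C *v q) \<ge> 0" using assms(2) unfolding sym_posdef_def by (cases "q = 0") (auto intro: less_imp_le)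
  moreover have "p \<noteq> 0 \<Longrightarrow> p \<bullet> (A *v p) > 0" using assms(1) unfolding sym_posdef_def by auto
  moreover have "q \<noteq> 0 \<Longrightarrow> q \<bullet> (C *v q) > 0" using assms(2) unfolding sym_posdef_def by auto
  ultimately show ?thesis unfolding z by (auto simp: block_mv inner_stack add_pos_nonneg add_nonneg_pos)
qed

lemma transpose_zero: "transpose (0::real^'n^'m) = 0"
  by (simp add: transpose_def vec_eq_iff)

lemma embed_block:
  fixes Y :: "real^'b::finite^'b"
  shows "block_diag (0::real^'a::finite^'a) Y = stack_rows (0::real^'b^'a) (mat 1) ** Y ** transpose (stack_rows (0::real^'b^'a) (mat 1))"
  by (rule mat_eq_stack2)
     (simp add: block_mv matrix_vector_mul_assoc[symmetric] stackT_mv stack_rows_mv transpose_zero del: transpose_matrix_vector)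

lemma stack_rows_0: "stack_rows (0::real^'n^'a) C = stack_rows (0::real^'b^'a) (mat 1) ** (C::real^'n^'b)"
  using stack_rows_mult[of 0 C "mat 1"] by simp




locale kf =
  fixes S T :: real
    and \<beta> :: "real \<Rightarrow> real^'d"
    and B :: "real \<Rightarrow> real^'d^'d"
    and \<sigma> :: "real \<Rightarrow> real^'e^'d"
    and L_S :: "real^'d^'mS" and L_T :: "real^'d^'mT"
    and \<Sigma>_S :: "real^'mS^'mS" and \<Sigma>_T :: "real^'mT^'mT"
    and v_S :: "real^'mS" and v_T :: "real^'mT"
    and \<Phi> :: "real \<Rightarrow> real^'d^'d"
  assumes S0: "0 < S" and ST: "S < T"
    and c\<beta>: "continuous_on {0..T} \<beta>" and cB: "continuous_on {0..T} B" and c\<sigma>: "continuous_on {0..T} \<sigma>"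
    and dP: "\<forall>t\<in>{0..T}. (\<Phi> has_vector_derivative (B t ** \<Phi> t)) (at t within {0..T})"
    and P0: "\<Phi> 0 = mat 1"
    and pdS: "sym_posdef \<Sigma>_S" and pdT: "sym_posdef \<Sigma>_T"
    and injS: "\<forall>t\<in>{0..S}. \<forall>x. L_stack L_S L_T \<Phi> S T t *v x = 0 \<longrightarrow> x = 0"
    and injT: "\<forall>t\<in>{S<..T}. \<forall>x. L_single L_T \<Phi> T t *v x = 0 \<longrightarrow> x = 0"
begin

definition "\<Psi> t = matrix_inv (\<Phi> t)"
abbreviation "L1 \<equiv> L_single L_T \<Phi> T"
abbreviation "L2 \<equiv> L_stack L_S L_T \<Phi> S T"
abbreviation "a \<equiv> diffusion \<sigma>"
definition "C1 = L_T ** \<Phi> T"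
definition "C2 = stack_rows (L_S ** \<Phi> S) (L_T ** \<Phi> T)"

lemma Pinv: "t \<in> {0..T} \<Longrightarrow> invertible (\<Phi> t)"
  using phi_invertible[OF cB dP P0] by blast

lemma PPsi: "t \<in> {0..T} \<Longrightarrow> \<Phi> t ** \<Psi> t = mat 1"
  unfolding \<Psi>_def using Pinv minv_r by blast
lemma PsiP: "t \<in> {0..T} \<Longrightarrow> \<Psi> t ** \<Phi> t = mat 1"
  unfolding \<Psi>_def using Pinv minv_l by blast

lemma dPsi: "t \<in> {0..T} \<Longrightarrow> (\<Psi> has_vector_derivative - (\<Psi> t ** B t)) (at t within {0..T})"
proof -
  assume t: "t \<in> {0..T}"
  have "(\<Psi> has_vector_derivative - (\<Psi> t ** (B t ** \<Phi> t) ** \<Psi> t)) (at t within {0..T})"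
  proof -
    have "(\<Phi> has_vector_derivative (B t ** \<Phi> t)) (at t within {0..T})" using dP t by blast
    from inv_deriv[OF Pinv t this] show ?thesis unfolding \<Psi>_def[abs_def] .
  qed
  moreover have "\<Psi> t ** (B t ** \<Phi> t) ** \<Psi> t = \<Psi> t ** B t"
    using PPsi[OF t] by (simp add: matrix_mul_assoc[symmetric])
  ultimately show ?thesis by simp
qed

lemma cPsi: "continuous_on {0..T} \<Psi>"
  using dPsi by (meson continuous_on_eq_continuous_within has_vector_derivative_continuous)

lemma dCPsi: "t \<in> {0..T} \<Longrightarrow> ((\<lambda>s. C ** \<Psi> s) has_vector_derivative - ((C ** \<Psi> t) ** B t)) (at t within {0..T})"
  using bounded_linear.has_vector_derivative[OF bounded_bilinear.bounded_linear_right[OF bb_mmult] dPsi, of t C]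
  by (simp add: mm_minus_right matrix_mul_assoc)

lemma L1_eq: "L1 t = C1 ** \<Psi> t"
  unfolding L_single_def trans_mat_def C1_def \<Psi>_def by (simp add: matrix_mul_assoc)

lemma L2_eq: "t \<in> {0..S} \<Longrightarrow> L2 t = C2 ** \<Psi> t"
  unfolding L_stack_def trans_mat_def C2_def \<Psi>_def by (simp add: matrix_mul_assoc stack_rows_mult)

lemma L2_eq': "t \<in> {S<..T} \<Longrightarrow> L2 t = stack_rows 0 (L1 t)"
  unfolding L_stack_def L_single_def by simp

lemma dL1: "t \<in> {0..T} \<Longrightarrow> (L1 has_vector_derivative - (L1 t ** B t)) (at t within {0..T})"
  unfolding L1_eq by (rule dCPsi)

lemma dL2: "t \<in> {0..S} \<Longrightarrow> (L2 has_vector_derivative - (L2 t ** B t)) (at t within {0..S})"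
proof -
  assume t: "t \<in> {0..S}"
  then have tT: "t \<in> {0..T}" using ST by auto
  have "((\<lambda>s. C2 ** \<Psi> s) has_vector_derivative - ((C2 ** \<Psi> t) ** B t)) (at t within {0..S})"
    by (rule has_vector_derivative_within_subset[OF dCPsi[OF tT]]) (use ST in auto)
  then have "((\<lambda>s. C2 ** \<Psi> s) has_vector_derivative - (L2 t ** B t)) (at t within {0..S})"
    unfolding L2_eq[OF t] .
  then show ?thesis
    by (rule has_vector_derivative_transform[OF t, rotated]) (simp add: L2_eq)
qed

lemma cL1: "continuous_on {0..T} L1"
  unfolding L1_eq by (intro bounded_linear.continuous_on[OF bounded_bilinear.bounded_linear_right[OF bb_mmult]] cPsi)

lemma ca: "continuous_on {0..T} a"
  unfolding diffusion_def[abs_def]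
  by (intro bounded_bilinear.continuous_on[OF bb_mmult] bounded_linear.continuous_on[OF bl_transpose] c\<sigma>)

lemma cg1: "continuous_on {0..T} (\<lambda>\<tau>. L1 \<tau> ** a \<tau> ** transpose (L1 \<tau>))"
  by (intro bounded_bilinear.continuous_on[OF bb_mmult] bounded_linear.continuous_on[OF bl_transpose] cL1 ca)

lemma cm1: "continuous_on {0..T} (\<lambda>\<tau>. L1 \<tau> *v \<beta> \<tau>)"
  by (intro bounded_bilinear.continuous_on[OF bb_mvmult] cL1 c\<beta>)


abbreviation "g1 \<equiv> \<lambda>\<tau>. L1 \<tau> ** a \<tau> ** transpose (L1 \<tau>)"
abbreviation "g2 \<equiv> \<lambda>\<tau>. L2 \<tau> ** a \<tau> ** transpose (L2 \<tau>)"
abbreviation "g2c \<equiv> \<lambda>\<tau>. (C2 ** \<Psi> \<tau>) ** a \<tau> ** transpose (C2 ** \<Psi> \<tau>)"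
abbreviation "m1 \<equiv> \<lambda>\<tau>. L1 \<tau> *v \<beta> \<tau>"
abbreviation "m2 \<equiv> \<lambda>\<tau>. L2 \<tau> *v \<beta> \<tau>"
abbreviation "m2c \<equiv> \<lambda>\<tau>. (C2 ** \<Psi> \<tau>) *v \<beta> \<tau>"
definition "E = stack_rows (0::real^'mT^'mS) (mat 1)"

lemma cCPsi: "continuous_on {0..T} (\<lambda>\<tau>. C ** \<Psi> \<tau>)"
  by (intro bounded_linear.continuous_on[OF bounded_bilinear.bounded_linear_right[OF bb_mmult]] cPsi)

lemma cg2c: "continuous_on {0..T} g2c"
  by (intro bounded_bilinear.continuous_on[OF bb_mmult] bounded_linear.continuous_on[OF bl_transpose] cCPsi ca)

lemma cm2c: "continuous_on {0..T} m2c"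
  by (intro bounded_bilinear.continuous_on[OF bb_mvmult] cCPsi c\<beta>)

lemma g2_eq: "t \<in> {0..S} \<Longrightarrow> g2 t = g2c t"
  by (simp add: L2_eq)
lemma m2_eq: "t \<in> {0..S} \<Longrightarrow> m2 t = m2c t"
  by (simp add: L2_eq)

lemma g2_Ioc: "t \<in> {S<..T} \<Longrightarrow> g2 t = block_diag 0 (g1 t)"
proof -
  assume t: "t \<in> {S<..T}"
  have "L2 t = E ** L1 t" unfolding E_def using L2_eq'[OF t] stack_rows_0 by metis
  then show ?thesis unfolding E_def embed_block
    by (simp add: matrix_transpose_mul matrix_mul_assoc)
qed

lemma m2_Ioc: "t \<in> {S<..T} \<Longrightarrow> m2 t = stack_vec 0 (m1 t)"
  by (simp add: L2_eq' stack_rows_mv)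

lemma bl_E: "bounded_linear (\<lambda>Y::real^'mT^'mT. E ** Y ** transpose E)"
  by (intro bounded_linear_compose[OF bounded_bilinear.bounded_linear_left[OF bb_mmult]]
       bounded_bilinear.bounded_linear_right[OF bb_mmult])

lemma bl_Ev: "bounded_linear (\<lambda>v::real^'mT. E *v v)"
  by (rule bounded_bilinear.bounded_linear_right[OF bb_mvmult])

lemma g1_int: "{c..d} \<subseteq> {0..T} \<Longrightarrow> g1 integrable_on {c..d}"
  by (rule integrable_continuous_interval, rule continuous_on_subset[OF cg1])

lemma m1_int: "{c..d} \<subseteq> {0..T} \<Longrightarrow> m1 integrable_on {c..d}"
  by (rule integrable_continuous_interval, rule continuous_on_subset[OF cm1])

lemma g2_ST: "g2 integrable_on {S..T} \<and> integral {S..T} g2 = block_diag 0 (integral {S..T} g1)"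
proof -
  define h where "h = (\<lambda>Y::real^'mT^'mT. E ** Y ** transpose E)"
  have gi: "g1 integrable_on {S..T}" by (rule g1_int) (use S0 in auto)
  have hi: "(h \<circ> g1) integrable_on {S..T}" using integrable_linear[OF gi bl_E[folded h_def]] .
  have eq: "g2 x = (h \<circ> g1) x" if "x \<in> {S..T} - {S}" for x
    using that g2_Ioc[of x] by (auto simp: h_def E_def embed_block)
  have "g2 integrable_on {S..T}" by (rule integrable_spike[OF hi negligible_sing eq])
  moreover have "integral {S..T} g2 = integral {S..T} (h \<circ> g1)"
    by (rule integral_spike[OF negligible_sing[of S]]) (use eq in auto)
  moreover have "integral {S..T} (h \<circ> g1) = h (integral {S..T} g1)"
    using integral_linear[OF gi bl_E[folded h_def]] .
  ultimately show ?thesis by (simp add: h_def E_def embed_block)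
qed

lemma m2_ST: "m2 integrable_on {S..T} \<and> integral {S..T} m2 = stack_vec 0 (integral {S..T} m1)"
proof -
  define h where "h = (\<lambda>v::real^'mT. E *v v)"
  have hs: "h v = stack_vec 0 v" for v unfolding h_def E_def by (simp add: stack_rows_mv)
  have gi: "m1 integrable_on {S..T}" by (rule m1_int) (use S0 in auto)
  have hi: "(h \<circ> m1) integrable_on {S..T}" using integrable_linear[OF gi bl_Ev[folded h_def]] .
  have eq: "m2 x = (h \<circ> m1) x" if "x \<in> {S..T} - {S}" for x
    using that m2_Ioc[of x] by (auto simp: hs)
  have "m2 integrable_on {S..T}" by (rule integrable_spike[OF hi negligible_sing eq])
  moreover have "integral {S..T} m2 = integral {S..T} (h \<circ> m1)"
    by (rule integral_spike[OF negligible_sing[of S]]) (use eq in auto)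
  moreover have "integral {S..T} (h \<circ> m1) = h (integral {S..T} m1)"
    using integral_linear[OF gi bl_Ev[folded h_def]] .
  ultimately show ?thesis by (simp add: hs)
qed


lemma g2_int: "s \<in> {0..S} \<Longrightarrow> g2 integrable_on {s..T}"
proof -
  assume s: "s \<in> {0..S}"
  have "g2c integrable_on {s..S}"
    by (rule integrable_continuous_interval, rule continuous_on_subset[OF cg2c]) (use s ST in auto)
  then have "g2 integrable_on {s..S}" by (rule integrable_eq) (use s g2_eq in auto)
  then show ?thesis using Henstock_Kurzweil_Integration.integrable_combine[of s S T g2] g2_ST s ST by auto
qed

lemma m2_int: "s \<in> {0..S} \<Longrightarrow> m2 integrable_on {s..T}"
proof -
  assume s: "s \<in> {0..S}"
  have "m2c integrable_on {s..S}"
    by (rule integrable_continuous_interval, rule continuous_on_subset[OF cm2c]) (use s ST in auto)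
  then have "m2 integrable_on {s..S}" by (rule integrable_eq) (use s m2_eq in auto)
  then show ?thesis using Henstock_Kurzweil_Integration.integrable_combine[of s S T m2] m2_ST s ST by auto
qed

lemma dA1: "t \<in> {0..T} \<Longrightarrow> ((\<lambda>s. integral {s..T} g1 + \<Sigma>_T) has_vector_derivative - (g1 t)) (at t within {0..T})"
proof -
  assume t: "t \<in> {0..T}"
  have "((\<lambda>s. integral {s..T} g1) has_vector_derivative - (g1 t)) (at t within {0..T})"
    by (rule int_lower_deriv[OF _ order_refl cg1 _ _ t]) (use ST S0 g1_int[of T T] in auto)
  from has_vector_derivative_add[OF this has_vector_derivative_const] show ?thesis by simp
qed

lemma dmu1: "t \<in> {0..T} \<Longrightarrow> ((\<lambda>s. kf_mu L1 \<beta> T s) has_vector_derivative - (m1 t)) (at t within {0..T})"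
  unfolding kf_mu_def
  by (rule int_lower_deriv[OF _ order_refl cm1]) (use ST S0 m1_int[of T T] in auto)

lemma dA2: "t \<in> {0..S} \<Longrightarrow> ((\<lambda>s. integral {s..T} g2 + block_diag \<Sigma>_S \<Sigma>_T) has_vector_derivative - (g2 t)) (at t within {0..S})"
proof -
  assume t: "t \<in> {0..S}"
  have c: "continuous_on {0..S} g2c" by (rule continuous_on_subset[OF cg2c]) (use ST in auto)
  have "((\<lambda>s. integral {s..T} g2) has_vector_derivative - (g2c t)) (at t within {0..S})"
    by (rule int_lower_deriv[OF _ _ c _ _ t]) (use ST S0 g2_ST g2_eq in auto)
  moreover have "g2c t = g2 t" by (rule g2_eq[OF t, symmetric])
  ultimately have "((\<lambda>s. integral {s..T} g2) has_vector_derivative - (g2 t)) (at t within {0..S})" by simp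
  then show ?thesis by (simp add: has_vector_derivative_add_const)
qed

lemma dmu2: "t \<in> {0..S} \<Longrightarrow> ((\<lambda>s. kf_mu L2 \<beta> T s) has_vector_derivative - (m2 t)) (at t within {0..S})"
proof -
  assume t: "t \<in> {0..S}"
  have c: "continuous_on {0..S} m2c" by (rule continuous_on_subset[OF cm2c]) (use ST in auto)
  have "((\<lambda>s. kf_mu L2 \<beta> T s) has_vector_derivative - (m2c t)) (at t within {0..S})"
    unfolding kf_mu_def by (rule int_lower_deriv[OF _ _ c _ _ t]) (use ST S0 m2_ST m2_eq in auto)
  moreover have "m2c t = m2 t" by (rule m2_eq[OF t, symmetric])
  ultimately show ?thesis by simp
qed

lemma pdA1: "s \<in> {0..T} \<Longrightarrow> z \<noteq> 0 \<Longrightarrow> z \<bullet> ((integral {s..T} g1 + \<Sigma>_T) *v z) > 0"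
proof -
  assume s: "s \<in> {0..T}" and z: "z \<noteq> 0"
  have "0 \<le> z \<bullet> (integral {s..T} g1 *v z)"
    using psd_integral[of L1 \<sigma> "{s..T}" z] g1_int[of s T] s unfolding diffusion_def by auto
  moreover have "z \<bullet> (\<Sigma>_T *v z) > 0" using pdT z unfolding sym_posdef_def by auto
  ultimately show ?thesis by (simp add: matrix_vector_mult_add_rdistrib inner_add_right)
qed

lemma pdA2: "s \<in> {0..S} \<Longrightarrow> z \<noteq> 0 \<Longrightarrow> z \<bullet> ((integral {s..T} g2 + block_diag \<Sigma>_S \<Sigma>_T) *v z) > 0"
proof -
  assume s: "s \<in> {0..S}" and z: "z \<noteq> 0"
  have "0 \<le> z \<bullet> (integral {s..T} g2 *v z)"
    using psd_integral[of L2 \<sigma> "{s..T}" z] g2_int[OF s] unfolding diffusion_def by auto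
  moreover have "z \<bullet> (block_diag \<Sigma>_S \<Sigma>_T *v z) > 0" by (rule block_pd[OF pdS pdT z])
  ultimately show ?thesis by (simp add: matrix_vector_mult_add_rdistrib inner_add_right)
qed

lemma L1T: "L1 T = L_T"
  using PPsi[of T] ST S0 unfolding L1_eq C1_def by (simp add: matrix_mul_assoc[symmetric])

lemma injL1: "t \<in> {0..T} \<Longrightarrow> L1 t *v x = 0 \<Longrightarrow> x = 0"
proof -
  assume t: "t \<in> {0..T}" and h: "L1 t *v x = 0"
  have T: "T \<in> {0..T}" "T \<in> {S<..T}" using ST S0 by auto
  have "L_T *v (\<Phi> T *v (\<Psi> t *v x)) = 0" using h unfolding L1_eq C1_def by (simp add: matrix_vector_mul_assoc matrix_mul_assoc)
  moreover have "\<forall>x. L_T *v x = 0 \<longrightarrow> x = 0" using bspec[OF injT T(2)] L1T by simp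
  ultimately have "\<Phi> T *v (\<Psi> t *v x) = 0" by blast
  then have "\<Psi> T *v (\<Phi> T *v (\<Psi> t *v x)) = 0" by simp
  then have "\<Psi> t *v x = 0" using PsiP[OF T(1)] by (simp add: matrix_vector_mul_assoc matrix_mul_assoc)
  then have "\<Phi> t *v (\<Psi> t *v x) = 0" by simp
  then show "x = 0" using PPsi[OF t] by (simp add: matrix_vector_mul_assoc)
qed

lemma invA1: "s \<in> {0..T} \<Longrightarrow> invertible (integral {s..T} g1 + \<Sigma>_T)"
  by (rule pd_invertible) (rule pdA1)
lemma invH1: "s \<in> {0..T} \<Longrightarrow> invertible (transpose (L1 s) ** matrix_inv (integral {s..T} g1 + \<Sigma>_T) ** L1 s)"
  by (rule H_invertible) (auto intro: pdA1 injL1)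
lemma invA2: "s \<in> {0..S} \<Longrightarrow> invertible (integral {s..T} g2 + block_diag \<Sigma>_S \<Sigma>_T)"
  by (rule pd_invertible) (rule pdA2)
lemma invH2: "s \<in> {0..S} \<Longrightarrow> invertible (transpose (L2 s) ** matrix_inv (integral {s..T} g2 + block_diag \<Sigma>_S \<Sigma>_T) ** L2 s)"
  by (rule H_invertible) (use pdA2 injS in auto)

abbreviation "N1 \<equiv> kf_nu L1 \<beta> a \<Sigma>_T v_T T"
abbreviation "N2 \<equiv> kf_nu L2 \<beta> a (block_diag \<Sigma>_S \<Sigma>_T) (stack_vec v_S v_T) T"

lemma dN1: "t \<in> {0..T} \<Longrightarrow> (N1 has_vector_derivative (B t *v N1 t + \<beta> t)) (at t within {0..T})"
  unfolding kf_nu_def kf_H_def kf_M_def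
  by (rule nu_deriv[OF _ dL1 dA1 dmu1 invA1 invH1])

lemma dN2: "t \<in> {0..S} \<Longrightarrow> (N2 has_vector_derivative (B t *v N2 t + \<beta> t)) (at t within {0..S})"
  unfolding kf_nu_def kf_H_def kf_M_def
  by (rule nu_deriv[OF _ dL2 dA2 dmu2 invA2 invH2])


lemma N1T: "N1 T = matrix_inv (transpose L_T ** matrix_inv \<Sigma>_T ** L_T)
                 *v (transpose L_T *v (matrix_inv \<Sigma>_T *v v_T))"
  unfolding kf_nu_def kf_H_def kf_M_def kf_mu_def L1T by simp

lemma cN1: "continuous (at S within {0..T}) N1"
  using dN1[of S] S0 ST has_vector_derivative_continuous by auto

lemma cH1: "continuous (at S within {0..T}) (kf_H L1 a \<Sigma>_T T)"
proof -
  have Sin: "S \<in> {0..T}" using S0 ST by auto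
  have cA: "continuous (at S within {0..T}) (\<lambda>s. integral {s..T} g1 + \<Sigma>_T)"
    using dA1[OF Sin] has_vector_derivative_continuous by blast
  have cM: "continuous (at S within {0..T}) (\<lambda>s. matrix_inv (integral {s..T} g1 + \<Sigma>_T))"
    by (rule inv_cont[OF invA1 Sin cA])
  have cL: "continuous (at S within {0..T}) L1" using cL1 Sin continuous_on_eq_continuous_within by blast
  show ?thesis unfolding kf_H_def[abs_def] kf_M_def
    by (intro bounded_bilinear.continuous[OF bb_mmult] bounded_linear.continuous[OF bl_transpose] cL cM)
qed

lemma L2S: "L2 S = stack_rows L_S (L1 S)"
proof -
  have "L_S ** trans_mat \<Phi> S S = L_S"
    using PPsi[of S] S0 ST unfolding trans_mat_def \<Psi>_def by simp
  then show ?thesis unfolding L_stack_def using S0 by (simp add: L_single_def)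
qed

lemma jump: "N2 S = matrix_inv (kf_H L2 a (block_diag \<Sigma>_S \<Sigma>_T) T S)
                *v (transpose L_S *v (matrix_inv \<Sigma>_S *v v_S) + kf_H L1 a \<Sigma>_T T S *v N1 S)"
proof -
  have Sin: "S \<in> {0..T}" "S \<in> {0..S}" using S0 ST by auto
  have iS: "invertible \<Sigma>_S" by (rule pd_invertible) (use pdS in \<open>auto simp: sym_posdef_def\<close>)
  have A2: "integral {S..T} g2 + block_diag \<Sigma>_S \<Sigma>_T = block_diag \<Sigma>_S (integral {S..T} g1 + \<Sigma>_T)"
    using g2_ST block_add[of 0 "integral {S..T} g1" \<Sigma>_S \<Sigma>_T] by simp
  have M2: "kf_M L2 a (block_diag \<Sigma>_S \<Sigma>_T) T S = block_diag (matrix_inv \<Sigma>_S) (kf_M L1 a \<Sigma>_T T S)"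
    unfolding kf_M_def A2 by (rule block_inv[OF iS invA1[OF Sin(1)]]) (use invA2[OF Sin(2)] A2 in simp)
  have mu2: "kf_mu L2 \<beta> T S = stack_vec 0 (kf_mu L1 \<beta> T S)"
    unfolding kf_mu_def using m2_ST by simp
  have y: "transpose (L2 S) *v (kf_M L2 a (block_diag \<Sigma>_S \<Sigma>_T) T S *v (stack_vec v_S v_T - kf_mu L2 \<beta> T S))
     = transpose L_S *v (matrix_inv \<Sigma>_S *v v_S) + transpose (L1 S) *v (kf_M L1 a \<Sigma>_T T S *v (v_T - kf_mu L1 \<beta> T S))"
    unfolding M2 mu2 L2S stack_vec_diff by (simp add: block_mv stackT_mv del: transpose_matrix_vector)
  have H1: "kf_H L1 a \<Sigma>_T T S *v N1 S = transpose (L1 S) *v (kf_M L1 a \<Sigma>_T T S *v (v_T - kf_mu L1 \<beta> T S))"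
  proof -
    have "kf_H L1 a \<Sigma>_T T S ** matrix_inv (kf_H L1 a \<Sigma>_T T S) = mat 1"
      using minv_r invH1[OF Sin(1)] unfolding kf_H_def kf_M_def by blast
    then show ?thesis unfolding kf_nu_def matrix_vector_mul_assoc[of "kf_H L1 a \<Sigma>_T T S" "matrix_inv (kf_H L1 a \<Sigma>_T T S)"] by simp
  qed
  show ?thesis unfolding kf_nu_def[of L2] y H1 ..
qed

end



theorem lemma3:
  fixes S T :: real
    and \<beta> :: "real \<Rightarrow> real^'d"
    and B :: "real \<Rightarrow> real^'d^'d"
    and \<sigma> :: "real \<Rightarrow> real^'e^'d"
    and L_S :: "real^'d^'mS" and L_T :: "real^'d^'mT"
    and \<Sigma>_S :: "real^'mS^'mS" and \<Sigma>_T :: "real^'mT^'mT"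
    and v_S :: "real^'mS" and v_T :: "real^'mT"
    and \<Phi> :: "real \<Rightarrow> real^'d^'d"
  defines "\<nu> \<equiv> (\<lambda>t. if t \<le> S
                  then kf_nu (L_stack L_S L_T \<Phi> S T) \<beta> (diffusion \<sigma>) (block_diag \<Sigma>_S \<Sigma>_T) (stack_vec v_S v_T) T t
                  else kf_nu (L_single L_T \<Phi> T) \<beta> (diffusion \<sigma>) \<Sigma>_T v_T T t)"
  assumes "0 < S" and "S < T"
    and "continuous_on {0..T} \<beta>" and "continuous_on {0..T} B" and "continuous_on {0..T} \<sigma>"
    and "\<forall>t\<in>{0..T}. (\<Phi> has_vector_derivative (B t ** \<Phi> t)) (at t within {0..T})"
    and "\<Phi> 0 = mat 1"
    and "sym_posdef \<Sigma>_S" and "sym_posdef \<Sigma>_T"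
    and "\<forall>t\<in>{0..S}. invertible
           (integral {t..T} (\<lambda>\<tau>. L_stack L_S L_T \<Phi> S T \<tau> ** diffusion \<sigma> \<tau> ** transpose (L_stack L_S L_T \<Phi> S T \<tau>)) + block_diag \<Sigma>_S \<Sigma>_T)"
    and "\<forall>t\<in>{S<..T}. invertible
           (integral {t..T} (\<lambda>\<tau>. L_single L_T \<Phi> T \<tau> ** diffusion \<sigma> \<tau> ** transpose (L_single L_T \<Phi> T \<tau>)) + \<Sigma>_T)"
    and "\<forall>t\<in>{0..S}. \<forall>x. L_stack L_S L_T \<Phi> S T t *v x = 0 \<longrightarrow> x = 0"
    and "\<forall>t\<in>{S<..T}. \<forall>x. L_single L_T \<Phi> T t *v x = 0 \<longrightarrow> x = 0"
  shows "(\<forall>t\<in>{S<..T}. (\<nu> has_vector_derivative (B t *v \<nu> t + \<beta> t)) (at t within {S<..T}))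
       \<and> \<nu> T = matrix_inv (transpose L_T ** matrix_inv \<Sigma>_T ** L_T)
                 *v (transpose L_T *v (matrix_inv \<Sigma>_T *v v_T))
       \<and> (\<forall>t\<in>{0..S}. (\<nu> has_vector_derivative (B t *v \<nu> t + \<beta> t)) (at t within {0..S}))
       \<and> (\<exists>\<nu>p Hp. (\<nu> \<longlongrightarrow> \<nu>p) (at_right S)
              \<and> (kf_H (L_single L_T \<Phi> T) (diffusion \<sigma>) \<Sigma>_T T \<longlongrightarrow> Hp) (at_right S)
              \<and> \<nu> S = matrix_inv (kf_H (L_stack L_S L_T \<Phi> S T) (diffusion \<sigma>) (block_diag \<Sigma>_S \<Sigma>_T) T S)
                        *v (transpose L_S *v (matrix_inv \<Sigma>_S *v v_S) + Hp *v \<nu>p))"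
proof -
  interpret kf S T \<beta> B \<sigma> L_S L_T \<Sigma>_S \<Sigma>_T v_S v_T \<Phi>
    by unfold_locales (use assms in auto)
  have nu1: "\<nu> t = N1 t" if "t \<in> {S<..T}" for t using that unfolding \<nu>_def by auto
  have nu2: "\<nu> t = N2 t" if "t \<in> {0..S}" for t using that unfolding \<nu>_def by auto
  have P1: "\<forall>t\<in>{S<..T}. (\<nu> has_vector_derivative (B t *v \<nu> t + \<beta> t)) (at t within {S<..T})"
  proof
    fix t assume t: "t \<in> {S<..T}"
    then have tT: "t \<in> {0..T}" using S0 by auto
    have "(N1 has_vector_derivative (B t *v N1 t + \<beta> t)) (at t within {S<..T})"
      by (rule has_vector_derivative_within_subset[OF dN1[OF tT]]) (use S0 in auto)
    then have "(N1 has_vector_derivative (B t *v \<nu> t + \<beta> t)) (at t within {S<..T})"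
      using nu1[OF t] by simp
    then show "(\<nu> has_vector_derivative (B t *v \<nu> t + \<beta> t)) (at t within {S<..T})"
      by (rule has_vector_derivative_transform[OF t, rotated]) (rule nu1)
  qed
  have P2: "\<nu> T = matrix_inv (transpose L_T ** matrix_inv \<Sigma>_T ** L_T)
                 *v (transpose L_T *v (matrix_inv \<Sigma>_T *v v_T))"
    using nu1[of T] ST N1T by simp
  have P3: "\<forall>t\<in>{0..S}. (\<nu> has_vector_derivative (B t *v \<nu> t + \<beta> t)) (at t within {0..S})"
  proof
    fix t assume t: "t \<in> {0..S}"
    have "(N2 has_vector_derivative (B t *v \<nu> t + \<beta> t)) (at t within {0..S})"
      using dN2[OF t] nu2[OF t] by simp
    then show "(\<nu> has_vector_derivative (B t *v \<nu> t + \<beta> t)) (at t within {0..S})"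
      by (rule has_vector_derivative_transform[OF t, rotated]) (rule nu2)
  qed
  have atr: "at S within {S..T} = at_right S" using ST by (rule at_within_Icc_at_right)
  have lim1: "(N1 \<longlongrightarrow> N1 S) (at_right S)"
  proof -
    have "continuous (at S within {S..T}) N1"
      by (rule continuous_within_subset[OF cN1]) (use S0 in auto)
    then show ?thesis unfolding atr continuous_within .
  qed
  have lim: "(\<nu> \<longlongrightarrow> N1 S) (at_right S)"
  proof (rule Lim_transform_eventually[OF lim1])
    have "\<forall>\<^sub>F x in at_right S. x \<in> {S<..T}"
      using ST by (auto simp: eventually_at_right_field intro!: exI[of _ T])
    then show "\<forall>\<^sub>F x in at_right S. N1 x = \<nu> x" by eventually_elim (simp add: nu1)
  qed
  have limH: "(kf_H L1 a \<Sigma>_T T \<longlongrightarrow> kf_H L1 a \<Sigma>_T T S) (at_right S)"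
  proof -
    have "continuous (at S within {S..T}) (kf_H L1 a \<Sigma>_T T)"
      by (rule continuous_within_subset[OF cH1]) (use S0 in auto)
    then show ?thesis unfolding atr continuous_within .
  qed
  have P4: "\<nu> S = matrix_inv (kf_H L2 a (block_diag \<Sigma>_S \<Sigma>_T) T S)
                *v (transpose L_S *v (matrix_inv \<Sigma>_S *v v_S) + kf_H L1 a \<Sigma>_T T S *v N1 S)"
    using nu2[of S] S0 jump by simp
  show ?thesis using P1 P2 P3 P4 lim limH by blast
qed



end
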